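(* Let $\varepsilon>0$. For a prime $q\leqslant x^{1-\varepsilon}$, real $z\leqslant 2x$, and any interval $I\subset[x,3x]$, \[ \frac1{\varphi(q)}\sum_{\chi\neq\chi_0}\left|\sum_{\substack{c^6\leqslant z\\ nc^6\in I}}\mu(c)\chi(n)\chi(c)^6f(n)\right|^2\ll_\varepsilon\Big(z^{\frac13}+|I|^{\frac16}q^{\frac56}\Big)\log^6x, \] where $|I|$ is the length of $I$.
   Context: Sums run over positive integers $n,c$; the outer sum is over non-principal Dirichlet characters $\chi$ modulo $q$ ($\chi_0$ the principal character). $\mu$ is the Möbius function and $\varphi$ Euler's totient function. $f(u):=\frac{\zeta(3/2)}{2u^{1/2}}+\frac{\zeta(2/3)}{3u^{2/3}}$ for $u>0$. *)

theory Defs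
  imports "HOL-Analysis.Analysis" "HOL-Computational_Algebra.Squarefree" "HOL-Number_Theory.Totient"
begin

definition moebius_mu :: "nat \<Rightarrow> int" where
  "moebius_mu n = (if squarefree n then (-1) ^ card (prime_factors n) else 0)"

text \<open>Riemann zeta function at real s > 0, s \<noteq> 1, via the Dirichlet eta function:
  zeta s = (sum_{n>=1} (-1)^(n-1) n^(-s)) / (1 - 2^(1-s)).  This is the analytic
  continuation on (0,1) and agrees with sum n^(-s) for s > 1.\<close>
definition rzeta :: "real \<Rightarrow> real" where
  "rzeta s = (\<Sum>n. (-1) ^ n / real (n + 1) powr s) / (1 - 2 powr (1 - s))"

definition fw :: "real \<Rightarrow> real" where
  "fw u = rzeta (3/2) / (2 * u powr (1/2)) + rzeta (2/3) / (3 * u powr (2/3))"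

definition dirichlet_char :: "nat \<Rightarrow> (nat \<Rightarrow> complex) \<Rightarrow> bool" where
  "dirichlet_char q chi \<longleftrightarrow> q > 0 \<and>
     (\<forall>m n. chi (m * n) = chi m * chi n) \<and>
     (\<forall>n. chi (n + q) = chi n) \<and>
     (\<forall>n. chi n = 0 \<longleftrightarrow> \<not> coprime n q) \<and>
     chi 1 = 1"

definition principal_char :: "nat \<Rightarrow> nat \<Rightarrow> complex" where
  "principal_char q n = (if coprime n q then 1 else 0)"

end

theory Submission
  imports Defs "HOL-Number_Theory.Number_Theory"
begin
lemma dc_period: assumes "dirichlet_char q chi" shows "chi (n + k*q) = chi n"
proof (induction k)
  case (Suc k)
  have "chi (n + Suc k * q) = chi ((n + k*q) + q)" by (simp add: algebra_simps)
  also have "\<dots> = chi (n + k*q)" using assms unfolding dirichlet_char_def by blast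
  finally show ?case using Suc by simp
qed simp

lemma dc_mod: assumes "dirichlet_char q chi" shows "chi (n mod q) = chi n"
  using dc_period[OF assms, of "n mod q" "n div q"] by (simp add: mod_div_mult_eq)

lemma dc_mult: assumes "dirichlet_char q chi" shows "chi (m * n) = chi m * chi n"
  using assms unfolding dirichlet_char_def by blast
lemma dc_one: assumes "dirichlet_char q chi" shows "chi 1 = 1"
  using assms unfolding dirichlet_char_def by blast
lemma dc_zero_iff: assumes "dirichlet_char q chi" shows "chi n = 0 \<longleftrightarrow> \<not> coprime n q"
  using assms unfolding dirichlet_char_def by blast

lemma dc_one': assumes "dirichlet_char q chi" shows "chi (Suc 0) = 1"
  using dc_one[OF assms] by simp

lemma dc_pow: assumes "dirichlet_char q chi" shows "chi (n^k) = chi n ^ k"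
  by (induction k) (simp_all add: dc_mult[OF assms] dc_one'[OF assms])

lemma dc_zero: assumes "dirichlet_char q chi" "prime q" shows "chi 0 = 0"
  using dc_zero_iff[OF assms(1), of 0] prime_gt_1_nat[OF assms(2)] by simp

lemma dc_norm1: assumes "dirichlet_char q chi" "prime q" "coprime n q"
  shows "cmod (chi n) = 1"
proof -
  have "\<not> q dvd n"
  proof
    assume "q dvd n"
    then have "q dvd gcd n q" by simp
    then show False using assms(2,3) by simp
  qed
  then have "[n ^ (q - 1) = 1] (mod q)" using fermat_theorem assms(2) by blast
  then have "(n ^ (q - 1)) mod q = 1" using prime_gt_1_nat[OF assms(2)]
    by (simp add: cong_def)
  then have "chi (n ^ (q-1)) = 1" using dc_mod[OF assms(1), of "n^(q-1)"] dc_one[OF assms(1)]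
    by simp
  then have "cmod (chi n) ^ (q-1) = 1" using dc_pow[OF assms(1)] by (metis norm_one norm_power)
  moreover have "q - 1 > 0" using prime_gt_1_nat[OF assms(2)] by simp
  ultimately show ?thesis using power_eq_imp_eq_base[of "cmod (chi n)" "q-1" 1] by simp
qed

lemma dc_norm_le: assumes "dirichlet_char q chi" "prime q" shows "cmod (chi n) \<le> 1"
proof (cases "coprime n q")
  case True then show ?thesis using dc_norm1[OF assms] by simp
next
  case False then have "chi n = 0" using dc_zero_iff[OF assms(1)] by blast
  then show ?thesis by simp
qed

lemma principal_dc: assumes "prime q" shows "dirichlet_char q (principal_char q)"
  unfolding dirichlet_char_def
proof (intro conjI allI)
  show "q > 0" using assms by (simp add: prime_gt_0_nat)
  fix m n :: nat
  show "principal_char q (m * n) = principal_char q m * principal_char q n"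
    unfolding principal_char_def by simp
next
  fix n show "principal_char q (n + q) = principal_char q n"
  proof -
    have "coprime (n+q) q = coprime n q" unfolding coprime_iff_gcd_eq_1 by (simp only: gcd_add1)
    then show ?thesis unfolding principal_char_def by simp
  qed
next
  fix n show "(principal_char q n = 0) = (\<not> coprime n q)"
    unfolding principal_char_def by simp
next
  show "principal_char q 1 = 1" unfolding principal_char_def by simp
qed

lemma res_coprime: fixes q r :: nat assumes "prime q" "r \<in> {1..<q}" shows "coprime r q"
proof -
  have "\<not> q dvd r" using assms(2) by (auto dest: dvd_imp_le simp: Nat.le_simps)
  then have "coprime q r" using prime_imp_coprime[OF assms(1)] by blast
  then show ?thesis by (simp add: coprime_commute)
qed

lemma mulmod_bij: fixes q a :: nat assumes "prime q" "coprime a q"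
  shows "bij_betw (\<lambda>r. a * r mod q) {1..<q} {1..<q}"
proof -
  let ?h = "\<lambda>r. a * r mod q"
  have q1: "q > 1" using prime_gt_1_nat[OF assms(1)] .
  have inj: "inj_on ?h {1..<q}"
  proof
    fix r s assume r: "r \<in> {1..<q}" and s: "s \<in> {1..<q}" and e: "?h r = ?h s"
    then have "[r * a = s * a] (mod q)" unfolding cong_def by (simp add: mult.commute)
    then have "[r = s] (mod q)" using cong_mult_rcancel_nat[OF assms(2)] by simp
    then show "r = s" using cong_less_modulus_unique_nat r s by auto
  qed
  have sub: "?h ` {1..<q} \<subseteq> {1..<q}"
  proof
    fix y assume "y \<in> ?h ` {1..<q}"
    then obtain r where r: "r \<in> {1..<q}" and y: "y = ?h r" by blast
    have "coprime r q" using res_coprime[OF assms(1) r] .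
    then have "coprime (a*r) q" using assms(2) by simp
    then have "\<not> q dvd (a*r)" using q1
      by (metis coprime_common_divisor dvd_refl nat_dvd_1_iff_1 less_irrefl)
    then have "y \<noteq> 0" using y by (simp add: dvd_eq_mod_eq_0)
    moreover have "y < q" using y q1 by simp
    ultimately show "y \<in> {1..<q}" by simp
  qed
  have "?h ` {1..<q} = {1..<q}" using endo_inj_surj[OF _ sub inj] by simp
  then show ?thesis using inj unfolding bij_betw_def by simp
qed

lemma dc_orth: assumes "prime q" "dirichlet_char q chi" "dirichlet_char q psi"
  shows "(\<Sum>r\<in>{1..<q}. cnj (chi r) * psi r) = (if chi = psi then of_nat (q-1) else 0)"
proof (cases "chi = psi")
  case True
  have "(\<Sum>r\<in>{1..<q}. cnj (chi r) * psi r) = (\<Sum>r\<in>{1..<q}. 1)"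
  proof (rule sum.cong)
    fix r assume r: "r \<in> {1..<q}"
    have "cmod (chi r) = 1" using dc_norm1[OF assms(2,1) res_coprime[OF assms(1) r]] .
    then have "chi r * cnj (chi r) = 1" using complex_norm_square[of "chi r"] by simp
    then show "cnj (chi r) * psi r = 1" using True by (simp add: mult.commute)
  qed simp
  then show ?thesis using True by simp
next
  case False
  then obtain a0 where "chi a0 \<noteq> psi a0" by blast
  define a where "a = a0 mod q"
  have ne: "chi a \<noteq> psi a" unfolding a_def using dc_mod[OF assms(2)] dc_mod[OF assms(3)] \<open>chi a0 \<noteq> psi a0\<close> by simp
  have cop: "coprime a q"
  proof (rule ccontr)
    assume "\<not> coprime a q"
    then have "chi a = 0" "psi a = 0" using dc_zero_iff[OF assms(2)] dc_zero_iff[OF assms(3)] by blast+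
    then show False using ne by simp
  qed
  define u where "u = cnj (chi a) * psi a"
  have n1: "cmod (chi a) = 1" using dc_norm1[OF assms(2,1) cop] .
  have "chi a * cnj (chi a) = 1" using n1 complex_norm_square[of "chi a"] by simp
  have u1: "u \<noteq> 1"
  proof
    assume "u = 1"
    then have "chi a * u = chi a" by simp
    then have "psi a = chi a" unfolding u_def using \<open>chi a * cnj (chi a) = 1\<close>
      by (metis mult.assoc mult_1)
    then show False using ne by simp
  qed
  let ?F = "\<lambda>r. cnj (chi r) * psi r"
  have "(\<Sum>r\<in>{1..<q}. ?F r) = (\<Sum>r\<in>{1..<q}. ?F (a * r mod q))"
    using sum.reindex_bij_betw[OF mulmod_bij[OF assms(1) cop], of ?F] by simp
  also have "\<dots> = (\<Sum>r\<in>{1..<q}. u * ?F r)"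
  proof (rule sum.cong)
    fix r
    have "?F (a * r mod q) = ?F (a*r)" using dc_mod[OF assms(2)] dc_mod[OF assms(3)] by simp
    also have "\<dots> = u * ?F r" unfolding u_def using dc_mult[OF assms(2)] dc_mult[OF assms(3)]
      by (simp add: algebra_simps)
    finally show "?F (a * r mod q) = u * ?F r" .
  qed simp
  also have "\<dots> = u * (\<Sum>r\<in>{1..<q}. ?F r)" by (simp add: sum_distrib_left)
  finally have "(1 - u) * (\<Sum>r\<in>{1..<q}. ?F r) = 0" by (simp add: algebra_simps)
  then show ?thesis using u1 False by simp
qed

lemma bessel:
  fixes S :: "(nat \<Rightarrow> complex) set" and R :: "nat set" and D :: "nat \<Rightarrow> complex" and p :: real
  assumes fS: "finite S" and fR: "finite R" and p: "p > 0"
    and orth: "\<And>chi psi. chi \<in> S \<Longrightarrow> psi \<in> S \<Longrightarrow>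
        (\<Sum>r\<in>R. cnj (chi r) * psi r) = (if chi = psi then complex_of_real p else 0)"
  shows "(\<Sum>chi\<in>S. (cmod (\<Sum>r\<in>R. chi r * D r))^2) \<le> p * (\<Sum>r\<in>R. (cmod (D r))^2)"
proof -
  define T where "T chi = (\<Sum>r\<in>R. chi r * D r)" for chi :: "nat \<Rightarrow> complex"
  define W where "W r = (\<Sum>chi\<in>S. T chi * cnj (chi r))" for r
  define c where "c = complex_of_real (1/p)"
  define X where "X = (\<Sum>chi\<in>S. T chi * cnj (T chi))"
  have cc: "cnj c = c" unfolding c_def by simp
  have cp: "c * complex_of_real p = 1" unfolding c_def using p by (simp add: field_simps)
  have X1: "(\<Sum>r\<in>R. cnj (D r) * W r) = X"
  proof -
    have "(\<Sum>r\<in>R. cnj (D r) * W r) = (\<Sum>r\<in>R. \<Sum>chi\<in>S. T chi * cnj (chi r * D r))"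
      unfolding W_def by (simp add: sum_distrib_left algebra_simps)
    also have "\<dots> = (\<Sum>chi\<in>S. \<Sum>r\<in>R. T chi * cnj (chi r * D r))" by (rule sum.swap)
    also have "\<dots> = X" unfolding X_def T_def by (simp add: sum_distrib_left)
    finally show ?thesis .
  qed
  have X2: "(\<Sum>r\<in>R. D r * cnj (W r)) = cnj X"
  proof -
    have "(\<Sum>r\<in>R. D r * cnj (W r)) = cnj (\<Sum>r\<in>R. cnj (D r) * W r)" by simp
    then show ?thesis using X1 by simp
  qed
  have X3: "(\<Sum>r\<in>R. W r * cnj (W r)) = complex_of_real p * X"
  proof -
    have "(\<Sum>r\<in>R. W r * cnj (W r)) = (\<Sum>r\<in>R. \<Sum>chi\<in>S. \<Sum>psi\<in>S. T chi * cnj (T psi) * (cnj (chi r) * psi r))"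
      unfolding W_def by (simp add: sum_distrib_left sum_distrib_right algebra_simps)
    also have "\<dots> = (\<Sum>chi\<in>S. \<Sum>r\<in>R. \<Sum>psi\<in>S. T chi * cnj (T psi) * (cnj (chi r) * psi r))"
      by (rule sum.swap)
    also have "\<dots> = (\<Sum>chi\<in>S. \<Sum>psi\<in>S. \<Sum>r\<in>R. T chi * cnj (T psi) * (cnj (chi r) * psi r))"
      by (simp add: sum.swap[of _ R])
    also have "\<dots> = (\<Sum>chi\<in>S. \<Sum>psi\<in>S. T chi * cnj (T psi) * (if chi = psi then complex_of_real p else 0))"
      by (simp add: sum_distrib_left[symmetric] orth)
    also have "\<dots> = (\<Sum>chi\<in>S. T chi * cnj (T chi) * complex_of_real p)"
      using fS by (simp add: if_distrib sum.delta cong: if_cong)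
    also have "\<dots> = complex_of_real p * X" unfolding X_def by (simp add: sum_distrib_left algebra_simps)
    finally show ?thesis .
  qed
  define E where "E r = D r - c * W r" for r
  have "(\<Sum>r\<in>R. E r * cnj (E r)) =
      (\<Sum>r\<in>R. D r * cnj (D r)) - c * (\<Sum>r\<in>R. cnj (D r) * W r) - c * (\<Sum>r\<in>R. D r * cnj (W r))
        + c * c * (\<Sum>r\<in>R. W r * cnj (W r))"
    unfolding E_def using cc by (simp add: algebra_simps sum.distrib sum_subtractf sum_distrib_left)
  also have "\<dots> = (\<Sum>r\<in>R. D r * cnj (D r)) - c * X - c * cnj X + c * (c * complex_of_real p) * X"
    using X1 X2 X3 by (simp add: algebra_simps)
  also have "\<dots> = (\<Sum>r\<in>R. D r * cnj (D r)) - c * X - c * cnj X + c * X" using cp by simp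
  finally have key: "(\<Sum>r\<in>R. E r * cnj (E r)) = (\<Sum>r\<in>R. D r * cnj (D r)) - c * cnj X" by simp
  have nsq: "\<And>z. z * cnj z = complex_of_real ((cmod z)^2)" by (rule complex_norm_square[symmetric])
  define tS where "tS = (\<Sum>chi\<in>S. (cmod (T chi))^2)"
  define dR where "dR = (\<Sum>r\<in>R. (cmod (D r))^2)"
  define eR where "eR = (\<Sum>r\<in>R. (cmod (E r))^2)"
  have XR: "X = complex_of_real tS" unfolding X_def tS_def nsq of_real_sum by (rule refl)
  have ER: "(\<Sum>r\<in>R. E r * cnj (E r)) = complex_of_real eR" unfolding eR_def nsq of_real_sum by (rule refl)
  have DR: "(\<Sum>r\<in>R. D r * cnj (D r)) = complex_of_real dR" unfolding dR_def nsq of_real_sum by (rule refl)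
  have "complex_of_real eR = complex_of_real (dR - (1/p) * tS)"
    using key unfolding ER DR XR c_def by (simp only: complex_cnj_complex_of_real of_real_diff of_real_mult)
  then have "eR = dR - (1/p) * tS" using of_real_eq_iff by blast
  moreover have "0 \<le> eR" unfolding eR_def by (simp add: sum_nonneg)
  ultimately have "0 \<le> dR - (1/p) * tS" by simp
  then have "tS \<le> p * dR" using p by (simp add: field_simps)
  then show ?thesis unfolding T_def tS_def dR_def .
qed

lemma group_res:
  assumes "prime q" "dirichlet_char q chi" "finite N"
  shows "(\<Sum>n\<in>N. chi n * complex_of_real (g n)) =
         (\<Sum>r\<in>{1..<q}. chi r * complex_of_real (\<Sum>n\<in>{n\<in>N. n mod q = r}. g n))"
proof -
  have q1: "q > 1" using prime_gt_1_nat[OF assms(1)] .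
  have "(\<Sum>n\<in>N. chi n * complex_of_real (g n)) =
        (\<Sum>n\<in>N. \<Sum>r\<in>{1..<q}. if n mod q = r then chi r * complex_of_real (g n) else 0)"
  proof (rule sum.cong)
    fix n assume "n \<in> N"
    show "chi n * complex_of_real (g n) =
        (\<Sum>r\<in>{1..<q}. if n mod q = r then chi r * complex_of_real (g n) else 0)"
    proof (cases "n mod q = 0")
      case True
      then have "chi n = 0" using dc_mod[OF assms(2), of n] dc_zero[OF assms(2,1)] by simp
      then show ?thesis using True by (simp add: sum.neutral)
    next
      case False
      then have "n mod q \<in> {1..<q}" using q1 by simp
      then have "(\<Sum>r\<in>{1..<q}. if n mod q = r then chi r * complex_of_real (g n) else 0)
          = chi (n mod q) * complex_of_real (g n)" by (simp add: sum.delta)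
      then show ?thesis using dc_mod[OF assms(2), of n] by simp
    qed
  qed simp
  also have "\<dots> = (\<Sum>r\<in>{1..<q}. \<Sum>n\<in>N. if n mod q = r then chi r * complex_of_real (g n) else 0)"
    by (rule sum.swap)
  also have "\<dots> = (\<Sum>r\<in>{1..<q}. chi r * complex_of_real (\<Sum>n\<in>{n\<in>N. n mod q = r}. g n))"
  proof (rule sum.cong)
    fix r
    show "(\<Sum>n\<in>N. if n mod q = r then chi r * complex_of_real (g n) else 0) =
          chi r * complex_of_real (\<Sum>n\<in>{n\<in>N. n mod q = r}. g n)"
      using assms(3) by (simp add: sum.inter_filter[symmetric] sum_distrib_left of_real_sum)
  qed simp
  finally show ?thesis .
qed

lemma char_sum_zero:
  assumes "prime q" "dirichlet_char q chi" "chi \<noteq> principal_char q"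
  shows "(\<Sum>r\<in>{1..<q}. chi r) = 0"
proof -
  have "(\<Sum>r\<in>{1..<q}. cnj (principal_char q r) * chi r) = 0"
    using dc_orth[OF assms(1) principal_dc[OF assms(1)] assms(2)] assms(3) by simp
  moreover have "(\<Sum>r\<in>{1..<q}. cnj (principal_char q r) * chi r) = (\<Sum>r\<in>{1..<q}. chi r)"
  proof (rule sum.cong)
    fix r assume "r \<in> {1..<q}"
    then have "coprime r q" using res_coprime[OF assms(1)] by blast
    then show "cnj (principal_char q r) * chi r = chi r" unfolding principal_char_def by simp
  qed simp
  ultimately show ?thesis by simp
qed

lemma char_mean:
  assumes q: "prime q" and fS: "finite S"
    and S: "S \<subseteq> {chi. dirichlet_char q chi \<and> chi \<noteq> principal_char q}"
    and fN: "finite N"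
  shows "(\<Sum>chi\<in>S. (cmod (\<Sum>n\<in>N. chi n * complex_of_real (g n)))^2)
       \<le> real (q - 1) * (\<Sum>r\<in>{1..<q}. ((\<Sum>n\<in>{n\<in>N. n mod q = r}. g n) - m)^2)"
proof -
  define B where "B r = (\<Sum>n\<in>{n\<in>N. n mod q = r}. g n)" for r
  have eq: "(\<Sum>n\<in>N. chi n * complex_of_real (g n)) =
        (\<Sum>r\<in>{1..<q}. chi r * complex_of_real (B r - m))" if "chi \<in> S" for chi
  proof -
    have dc: "dirichlet_char q chi" "chi \<noteq> principal_char q" using that S by auto
    have "(\<Sum>n\<in>N. chi n * complex_of_real (g n)) = (\<Sum>r\<in>{1..<q}. chi r * complex_of_real (B r))"
      unfolding B_def by (rule group_res[OF q dc(1) fN])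
    also have "\<dots> = (\<Sum>r\<in>{1..<q}. chi r * complex_of_real (B r - m)) + complex_of_real m * (\<Sum>r\<in>{1..<q}. chi r)"
      by (simp add: algebra_simps sum_distrib_left sum.distrib sum_subtractf)
    also have "\<dots> = (\<Sum>r\<in>{1..<q}. chi r * complex_of_real (B r - m))"
      using char_sum_zero[OF q dc] by simp
    finally show ?thesis .
  qed
  have "(\<Sum>chi\<in>S. (cmod (\<Sum>n\<in>N. chi n * complex_of_real (g n)))^2)
      = (\<Sum>chi\<in>S. (cmod (\<Sum>r\<in>{1..<q}. chi r * complex_of_real (B r - m)))^2)"
    using eq by simp
  also have "\<dots> \<le> real (q - 1) * (\<Sum>r\<in>{1..<q}. (cmod (complex_of_real (B r - m)))^2)"
  proof (rule bessel[OF fS])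
    show "finite {1..<q}" by simp
    show "real (q - 1) > 0" using prime_gt_1_nat[OF q] by simp
    fix chi psi assume "chi \<in> S" "psi \<in> S"
    then show "(\<Sum>r\<in>{1..<q}. cnj (chi r) * psi r) = (if chi = psi then complex_of_real (real (q - 1)) else 0)"
    proof -
      have "dirichlet_char q chi" "dirichlet_char q psi" using \<open>chi \<in> S\<close> \<open>psi \<in> S\<close> S by auto
      from dc_orth[OF q this] show ?thesis by simp
    qed
  qed
  also have "\<dots> = real (q - 1) * (\<Sum>r\<in>{1..<q}. (B r - m)^2)"
    by (simp only: norm_of_real power2_abs)
  finally show ?thesis unfolding B_def .
qed

lemma div_bounds: fixes n q :: nat assumes "q > 0"
  shows "real (n div q) \<le> real n / real q" "real n / real q - 1 < real (n div q)"
proof -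
  have e: "real q * real (n div q) + real (n mod q) = real n"
    by (metis of_nat_add of_nat_mult div_mult_mod_eq mult.commute)
  have m: "real (n mod q) < real q" using assms by simp
  show "real (n div q) \<le> real n / real q" using e assms by (simp add: field_simps)
  have "real n < real q * (real (n div q) + 1)" using e m by (simp add: algebra_simps)
  then have "real n / real q < real (n div q) + 1" using assms by (simp add: field_simps)
  then show "real n / real q - 1 < real (n div q)" by simp
qed

lemma count_class: fixes a b q r :: nat assumes "q > 0" "a \<le> b"
  shows "real (card {n\<in>{a..b}. n mod q = r}) \<le> (real b - real a) / real q + 2"
proof -
  let ?C = "{n\<in>{a..b}. n mod q = r}"
  have inj: "inj_on (\<lambda>n. n div q) ?C"
  proof
    fix u v assume "u \<in> ?C" "v \<in> ?C" "u div q = v div q"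
    then show "u = v" by (metis (mono_tags, lifting) div_mult_mod_eq mem_Collect_eq)
  qed
  have sub: "(\<lambda>n. n div q) ` ?C \<subseteq> {a div q .. b div q}" by (auto intro: div_le_mono)
  have "card ?C = card ((\<lambda>n. n div q) ` ?C)" using card_image[OF inj] by simp
  also have "\<dots> \<le> card {a div q .. b div q}" by (rule card_mono[OF _ sub]) simp
  also have "\<dots> = b div q + 1 - a div q" by simp
  finally have c: "card ?C \<le> b div q + 1 - a div q" .
  have "a div q \<le> b div q" using assms(2) by (rule div_le_mono)
  then have "real (card ?C) \<le> real (b div q) + 1 - real (a div q)" using c by linarith
  also have "\<dots> \<le> real b / real q + 1 - (real a / real q - 1)"
    using div_bounds[OF assms(1), of b] div_bounds[OF assms(1), of a] by linarith
  also have "\<dots> = (real b - real a) / real q + 2" by (simp add: diff_divide_distrib)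
  finally show ?thesis .
qed

lemma sum_diff_le: fixes g :: "nat \<Rightarrow> real"
  assumes "finite X" "finite Y" "\<And>y. y \<in> Y - X \<Longrightarrow> 0 \<le> g y"
  shows "sum g X - sum g Y \<le> sum g (X - Y)"
proof -
  have "sum g X = sum g (X \<inter> Y) + sum g (X - Y)"
    using assms(1) by (metis Int_Diff_Un Int_Diff_disjoint finite_Diff finite_Int sum.union_disjoint)
  moreover have "sum g Y = sum g (Y \<inter> X) + sum g (Y - X)"
    using assms(2) by (metis Int_Diff_Un Int_Diff_disjoint finite_Diff finite_Int sum.union_disjoint)
  moreover have "sum g (Y - X) \<ge> 0" by (intro sum_nonneg) (use assms(3) in auto)
  ultimately show ?thesis by (simp add: Int_commute)
qed

lemma single_le: fixes g :: "nat \<Rightarrow> real" and W :: "nat set" and q :: nat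
  assumes "finite W" "\<And>u v. u \<in> W \<Longrightarrow> v \<in> W \<Longrightarrow> u mod q = v mod q"
    "\<And>u v. u \<in> W \<Longrightarrow> v \<in> W \<Longrightarrow> u \<le> v \<Longrightarrow> v < u + q"
    "\<And>u. u \<in> W \<Longrightarrow> g u \<le> G" "0 \<le> G"
  shows "sum g W \<le> G"
proof (cases "W = {}")
  case True then show ?thesis using assms(5) by simp
next
  case False
  then obtain w where w: "w \<in> W" by blast
  have eq: "u = v" if uv: "u \<in> W" "v \<in> W" "u \<le> v" for u v
  proof -
    have "v mod q = u mod q" using assms(2) uv by metis
    then have "q dvd v - u" using mod_eq_dvd_iff_nat[OF uv(3)] by blast
    moreover have "v - u < q" using assms(3)[OF uv(1,2,3)] uv(3) by (simp add: less_diff_conv2)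
    ultimately have "v - u = 0" using nat_dvd_not_less by (metis gr0I)
    then show "u = v" using uv(3) by simp
  qed
  have "W \<subseteq> {w}"
  proof
    fix v assume v: "v \<in> W"
    have "v = w"
    proof (cases "w \<le> v")
      case True then show ?thesis using eq[OF w v] by simp
    next
      case False then show ?thesis using eq[OF v w] by simp
    qed
    then show "v \<in> {w}" by simp
  qed
  then have "W = {w}" using w by blast
  then show ?thesis using assms(4) w by simp
qed

lemma anti_le: fixes g :: "nat \<Rightarrow> real"
  assumes "\<And>n. a \<le> n \<Longrightarrow> g (Suc n) \<le> g n" "a \<le> m" "m \<le> n"
  shows "g n \<le> g m"
  using assms(3)
proof (induction n rule: dec_induct)
  case (step k) then show ?case using assms(1)[of k] assms(2) by simp
qed simp

lemma dev: fixes g :: "nat \<Rightarrow> real" and a b q r s :: nat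
  assumes q: "q > 0" and rq: "r < q" and sq: "s < q"
    and mono: "\<And>n. a \<le> n \<Longrightarrow> g (Suc n) \<le> g n" and pos: "\<And>n. a \<le> n \<Longrightarrow> 0 \<le> g n"
  shows "(\<Sum>n\<in>{n\<in>{a..b}. n mod q = r}. g n) - (\<Sum>n\<in>{n\<in>{a..b}. n mod q = s}. g n) \<le> 2 * g a"
proof -
  define R where "R = {n\<in>{a..b}. n mod q = r}"
  define S where "S = {n\<in>{a..b}. n mod q = s}"
  define d where "d = (s + q - r) mod q"
  have fR: "finite R" and fS: "finite S" unfolding R_def S_def by auto
  have dq: "d < q" unfolding d_def using q by simp
  have ga: "g n \<le> g a" if "a \<le> n" for n using anti_le[where a=a and g=g, OF mono _ that] by simp
  have ga0: "0 \<le> g a" using pos by simp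
  have shmod: "(n + d) mod q = s" if "n \<in> R" for n
  proof -
    have nr: "n mod q = r" using that unfolding R_def by simp
    have "(n + d) mod q = (n mod q + d mod q) mod q" by (simp add: mod_add_eq)
    also have "\<dots> = (r mod q + (s + q - r) mod q) mod q" using nr rq unfolding d_def by simp
    also have "\<dots> = (r + (s + q - r)) mod q" by (simp add: mod_add_eq)
    also have "\<dots> = (s + q) mod q" using rq by simp
    also have "\<dots> = s" using sq by simp
    finally show ?thesis .
  qed
  have inj1: "inj_on (\<lambda>n. n + d) R" by (simp add: inj_on_def)
  have inj2: "inj_on (\<lambda>n. n + q) R" by (simp add: inj_on_def)
  define R1 where "R1 = (\<lambda>n. n + d) ` R"
  define R2 where "R2 = (\<lambda>n. n + q) ` R"
  have s1: "sum g R1 = (\<Sum>n\<in>R. g (n + d))" unfolding R1_def using sum.reindex[OF inj1] by simp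
  have s2: "sum g R2 = (\<Sum>n\<in>R. g (n + q))" unfolding R2_def using sum.reindex[OF inj2] by simp
  have fR1: "finite R1" "finite R2" unfolding R1_def R2_def using fR by auto
  have "(\<Sum>n\<in>R. g (n + q)) \<le> (\<Sum>n\<in>R. g (n + d))"
  proof (rule sum_mono)
    fix n assume "n \<in> R" then have "a \<le> n" unfolding R_def by simp
    then show "g (n + q) \<le> g (n + d)" using anti_le[where a=a and g=g and m="n+d" and n="n+q", OF mono] dq by simp
  qed
  then have i1: "sum g R - (\<Sum>n\<in>R. g (n + d)) \<le> sum g R - sum g R2" using s2 by simp
  have i2: "sum g R - sum g R2 \<le> sum g (R - R2)"
  proof (rule sum_diff_le[OF fR fR1(2)])
    fix y assume "y \<in> R2 - R" then show "0 \<le> g y" unfolding R2_def R_def using pos by auto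
  qed
  have i3: "sum g (R - R2) \<le> g a"
  proof (rule single_le[where q=q])
    show "finite (R - R2)" using fR by simp
    show "u mod q = v mod q" if "u \<in> R - R2" "v \<in> R - R2" for u v using that unfolding R_def by simp
    have low: "v < a + q" if "v \<in> R - R2" for v
    proof (rule ccontr)
      assume "\<not> v < a + q"
      then have v1: "a + q \<le> v" by simp
      have vR: "v \<in> R" using that by simp
      have "(v - q) mod q = v mod q" using v1 by (metis add_diff_cancel_right' le_add2 le_add_diff_inverse2 le_trans mod_add_self2)
      then have "v - q \<in> R" using vR v1 unfolding R_def by auto
      moreover have "v = (v - q) + q" using v1 by simp
      ultimately have "v \<in> R2" unfolding R2_def by blast
      then show False using that by simp
    qed
    show "v < u + q" if "u \<in> R - R2" "v \<in> R - R2" "u \<le> v" for u v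
      using low[OF that(2)] that(1) unfolding R_def by auto
    show "g u \<le> g a" if "u \<in> R - R2" for u using that ga unfolding R_def by auto
    show "0 \<le> g a" by (rule ga0)
  qed
  have j1: "sum g R1 - sum g S \<le> sum g (R1 - S)"
  proof (rule sum_diff_le[OF fR1(1) fS])
    fix y assume "y \<in> S - R1" then show "0 \<le> g y" unfolding S_def using pos by auto
  qed
  have j2: "sum g (R1 - S) \<le> g a"
  proof (rule single_le[where q=q])
    show "finite (R1 - S)" using fR1 by simp
    have mem: "w mod q = s \<and> a \<le> w \<and> b < w \<and> w < b + q" if wW: "w \<in> R1 - S" for w
    proof -
      obtain n where n: "n \<in> R" "w = n + d" using wW unfolding R1_def by blast
      have "w mod q = s" using shmod[OF n(1)] n(2) by simp
      moreover have "a \<le> w" "n \<le> b" using n unfolding R_def by auto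
      moreover have "\<not> w \<le> b" using wW calculation unfolding S_def by auto
      ultimately show ?thesis using n(2) dq by simp
    qed
    show "u mod q = v mod q" if "u \<in> R1 - S" "v \<in> R1 - S" for u v using mem[OF that(1)] mem[OF that(2)] by simp
    show "v < u + q" if "u \<in> R1 - S" "v \<in> R1 - S" "u \<le> v" for u v using mem[OF that(1)] mem[OF that(2)] by simp
    show "g u \<le> g a" if "u \<in> R1 - S" for u using mem[OF that] ga by simp
    show "0 \<le> g a" by (rule ga0)
  qed
  have "sum g R - sum g S = (sum g R - (\<Sum>n\<in>R. g (n + d))) + (sum g R1 - sum g S)" using s1 by simp
  also have "\<dots> \<le> g a + g a" using i1 i2 i3 j1 j2 by linarith
  finally show ?thesis unfolding R_def S_def by simp
qed

definition g1 :: "nat \<Rightarrow> real" where "g1 n = 1 / real n powr (1/2)"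
definition g2 :: "nat \<Rightarrow> real" where "g2 n = 1 / real n powr (2/3)"
definition AA :: real where "AA = \<bar>rzeta (3/2)\<bar> + \<bar>rzeta (2/3)\<bar>"

lemma gpow_anti: fixes e :: real assumes "0 < e" "1 \<le> n"
  shows "1 / real (Suc n) powr e \<le> 1 / real n powr e"
proof -
  have "real n powr e \<le> real (Suc n) powr e" using assms by (intro powr_mono2) auto
  moreover have "0 < real n powr e" using assms by simp
  ultimately show ?thesis by (simp add: frac_le)
qed

lemma g1_anti: "1 \<le> n \<Longrightarrow> g1 (Suc n) \<le> g1 n" unfolding g1_def by (rule gpow_anti) auto
lemma g2_anti: "1 \<le> n \<Longrightarrow> g2 (Suc n) \<le> g2 n" unfolding g2_def by (rule gpow_anti) auto
lemma g1_pos: "0 \<le> g1 n" unfolding g1_def by simp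
lemma g2_pos: "0 \<le> g2 n" unfolding g2_def by simp

lemma g2_le_g1: assumes "1 \<le> n" shows "g2 n \<le> g1 n"
proof -
  have "real n powr (1/2) \<le> real n powr (2/3)" using assms by (intro powr_mono) auto
  moreover have "0 < real n powr (1/2)" using assms by simp
  ultimately show ?thesis unfolding g1_def g2_def by (simp add: frac_le)
qed

lemma g1_sq: assumes "1 \<le> n" shows "(g1 n)^2 = 1 / real n"
proof -
  have "(real n powr (1/2))^2 = real n" using assms by (simp add: powr_half_sqrt)
  then show ?thesis unfolding g1_def by (simp add: power_divide)
qed

lemma fw_eq: "fw (real n) = (rzeta (3/2) / 2) * g1 n + (rzeta (2/3) / 3) * g2 n"
  unfolding fw_def g1_def g2_def by simp

lemma AA_nonneg: "0 \<le> AA" unfolding AA_def by simp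

lemma coef_le: assumes "0 \<le> t" shows "\<bar>rzeta (3/2) / 2\<bar> * t + \<bar>rzeta (2/3) / 3\<bar> * t \<le> AA * t"
proof -
  have "\<bar>rzeta (3/2) / 2\<bar> + \<bar>rzeta (2/3) / 3\<bar> \<le> AA" unfolding AA_def by (simp add: abs_divide)
  then have "(\<bar>rzeta (3/2) / 2\<bar> + \<bar>rzeta (2/3) / 3\<bar>) * t \<le> AA * t" using assms by (rule mult_right_mono)
  then show ?thesis by (simp add: distrib_right)
qed

lemma fw_abs: assumes "1 \<le> a" "a \<le> n" shows "\<bar>fw (real n)\<bar> \<le> AA * g1 a"
proof -
  have h1: "g1 n \<le> g1 a" using anti_le[where a=1 and g=g1, OF g1_anti assms] .
  have h2: "g2 n \<le> g1 a" using h1 g2_le_g1[of n] assms by simp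
  have "\<bar>fw (real n)\<bar> \<le> \<bar>rzeta (3/2) / 2 * g1 n\<bar> + \<bar>rzeta (2/3) / 3 * g2 n\<bar>"
    unfolding fw_eq by (rule abs_triangle_ineq)
  also have "\<dots> = \<bar>rzeta (3/2) / 2\<bar> * g1 n + \<bar>rzeta (2/3) / 3\<bar> * g2 n"
    using g1_pos[of n] g2_pos[of n] by (simp add: abs_mult)
  also have "\<dots> \<le> \<bar>rzeta (3/2) / 2\<bar> * g1 a + \<bar>rzeta (2/3) / 3\<bar> * g1 a"
    using h1 h2 by (intro add_mono mult_left_mono) auto
  also have "\<dots> \<le> AA * g1 a" by (rule coef_le[OF g1_pos])
  finally show ?thesis .
qed

lemma dev_abs: fixes g :: "nat \<Rightarrow> real"
  assumes "q > 0" "r < q" "s < q" "\<And>n. a \<le> n \<Longrightarrow> g (Suc n) \<le> g n" "\<And>n. a \<le> n \<Longrightarrow> 0 \<le> g n"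
  shows "\<bar>(\<Sum>n\<in>{n\<in>{a..b}. n mod q = r}. g n) - (\<Sum>n\<in>{n\<in>{a..b}. n mod q = s}. g n)\<bar> \<le> 2 * g a"
  using dev[of q r s a g b, OF assms] dev[of q s r a g b, OF assms(1,3,2,4,5)] by linarith

lemma Bdev: fixes a b q r s :: nat assumes "1 \<le> a" "q > 0" "r < q" "s < q"
  shows "\<bar>(\<Sum>n\<in>{n\<in>{a..b}. n mod q = r}. fw (real n)) - (\<Sum>n\<in>{n\<in>{a..b}. n mod q = s}. fw (real n))\<bar> \<le> 2 * AA * g1 a"
proof -
  define C where "C t = {n\<in>{a..b}. n mod q = t}" for t
  define al where "al = rzeta (3/2) / 2"
  define be where "be = rzeta (2/3) / 3"
  have split: "(\<Sum>n\<in>C t. fw (real n)) = al * (\<Sum>n\<in>C t. g1 n) + be * (\<Sum>n\<in>C t. g2 n)" for t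
    unfolding fw_eq al_def be_def by (simp add: sum.distrib sum_distrib_left)
  have d1: "\<bar>(\<Sum>n\<in>C r. g1 n) - (\<Sum>n\<in>C s. g1 n)\<bar> \<le> 2 * g1 a"
    unfolding C_def using assms by (intro dev_abs) (auto intro: g1_anti g1_pos)
  have d2: "\<bar>(\<Sum>n\<in>C r. g2 n) - (\<Sum>n\<in>C s. g2 n)\<bar> \<le> 2 * g2 a"
    unfolding C_def using assms by (intro dev_abs) (auto intro: g2_anti g2_pos)
  have "(\<Sum>n\<in>C r. fw (real n)) - (\<Sum>n\<in>C s. fw (real n))
      = al * ((\<Sum>n\<in>C r. g1 n) - (\<Sum>n\<in>C s. g1 n)) + be * ((\<Sum>n\<in>C r. g2 n) - (\<Sum>n\<in>C s. g2 n))"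
    unfolding split by (simp add: algebra_simps)
  also have "\<bar>\<dots>\<bar> \<le> \<bar>al\<bar> * (2 * g1 a) + \<bar>be\<bar> * (2 * g2 a)"
  proof -
    have "\<bar>al * ((\<Sum>n\<in>C r. g1 n) - (\<Sum>n\<in>C s. g1 n))\<bar> \<le> \<bar>al\<bar> * (2 * g1 a)"
      unfolding abs_mult using d1 by (intro mult_left_mono) auto
    moreover have "\<bar>be * ((\<Sum>n\<in>C r. g2 n) - (\<Sum>n\<in>C s. g2 n))\<bar> \<le> \<bar>be\<bar> * (2 * g2 a)"
      unfolding abs_mult using d2 by (intro mult_left_mono) auto
    ultimately show ?thesis using abs_triangle_ineq by (smt (verit))
  qed
  also have "\<dots> \<le> \<bar>al\<bar> * (2 * g1 a) + \<bar>be\<bar> * (2 * g1 a)"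
    using g2_le_g1[OF assms(1)] by (simp add: mult_left_mono)
  also have "\<dots> = \<bar>rzeta (3/2) / 2\<bar> * (2 * g1 a) + \<bar>rzeta (2/3) / 3\<bar> * (2 * g1 a)"
    unfolding al_def be_def by simp
  also have "\<dots> \<le> AA * (2 * g1 a)" by (rule coef_le) (simp add: g1_pos)
  also have "\<dots> \<le> 2 * AA * g1 a" by simp
  finally show ?thesis unfolding C_def .
qed

lemma classes_le: fixes h :: "nat \<Rightarrow> real"
  assumes "finite N" "\<And>n. n \<in> N \<Longrightarrow> 0 \<le> h n"
  shows "(\<Sum>r\<in>{1..<q}. \<Sum>n\<in>{n\<in>N. n mod q = r}. h n) \<le> (\<Sum>n\<in>N. h n)"
proof -
  have "(\<Sum>r\<in>{1..<q}. \<Sum>n\<in>{n\<in>N. n mod q = r}. h n) = (\<Sum>r\<in>{1..<q}. \<Sum>n\<in>N. if n mod q = r then h n else 0)"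
    using assms(1) by (simp add: sum.inter_filter)
  also have "\<dots> = (\<Sum>n\<in>N. \<Sum>r\<in>{1..<q}. if n mod q = r then h n else 0)" by (rule sum.swap)
  also have "\<dots> = (\<Sum>n\<in>N. if n mod q \<in> {1..<q} then h n else 0)"
    by (intro sum.cong refl) (simp add: sum.delta)
  also have "\<dots> \<le> (\<Sum>n\<in>N. h n)" using assms(2) by (intro sum_mono) auto
  finally show ?thesis .
qed

lemma sq_le_of_abs: fixes t M :: real assumes "\<bar>t\<bar> \<le> M" shows "t^2 \<le> M^2"
  using assms by (metis abs_ge_zero power2_abs power_mono)

lemma per_c:
  fixes x :: real and c q :: nat and I :: "real set"
  assumes q: "prime q" and fS: "finite S" and S: "S \<subseteq> {chi. dirichlet_char q chi \<and> chi \<noteq> principal_char q}"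
    and x: "x > 0" and c: "1 \<le> c" and cz: "real (c^6) \<le> 2*x"
    and I: "is_interval I" "I \<subseteq> {x..3*x}"
  shows "(\<Sum>chi\<in>S. (cmod (\<Sum>n\<in>{n. 1 \<le> n \<and> real (n * c^6) \<in> I}. chi n * complex_of_real (fw (real n))))^2)
         \<le> real (q-1) * (16 * AA^2)"
proof -
  define N where "N = {n. 1 \<le> n \<and> real (n * c^6) \<in> I}"
  define K where "K = real (c^6)"
  have K1: "1 \<le> K" unfolding K_def using c by simp
  have q1: "q > 1" using prime_gt_1_nat[OF q] .
  have AA0: "0 \<le> AA" by (rule AA_nonneg)
  have memI: "x \<le> real n * K \<and> real n * K \<le> 3 * x" if "n \<in> N" for n
    using that I(2) unfolding N_def K_def by auto
  have fN: "finite N"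
  proof (rule finite_subset)
    show "N \<subseteq> {..nat \<lceil>3*x\<rceil>}"
    proof
      fix n assume "n \<in> N"
      then have "real n * K \<le> 3 * x" using memI by blast
      moreover have "real n * 1 \<le> real n * K" using K1 by (intro mult_left_mono) auto
      ultimately have "real n \<le> 3 * x" by linarith
      then show "n \<in> {..nat \<lceil>3*x\<rceil>}" by (simp add: le_nat_iff) linarith
    qed
  qed simp
  show ?thesis
  proof (cases "N = {}")
    case True
    then show ?thesis unfolding N_def[symmetric] using q1 AA0 by simp
  next
    case False
    define a where "a = Min N"
    define b where "b = Max N"
    have aN: "a \<in> N" unfolding a_def using fN False by simp
    have bN: "b \<in> N" unfolding b_def using fN False by simp
    have a1: "1 \<le> a" using aN unfolding N_def by simp
    have Nab: "N = {a..b}"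
    proof
      show "N \<subseteq> {a..b}" unfolding a_def b_def using fN by auto
      show "{a..b} \<subseteq> N"
      proof
        fix n assume n: "n \<in> {a..b}"
        have ia: "real (a * c^6) \<in> I" and ib: "real (b * c^6) \<in> I" using aN bN unfolding N_def by auto
        have "real (a * c^6) \<le> real (n * c^6)" "real (n * c^6) \<le> real (b * c^6)" using n by (auto intro!: mult_right_mono)
        then have "real (n * c^6) \<in> I" using I(1) ia ib unfolding is_interval_1 by blast
        then show "n \<in> N" unfolding N_def using n a1 by simp
      qed
    qed
    have ab: "a \<le> b" using Nab aN by auto
    have ax: "x \<le> real a * K" using memI[OF aN] by simp
    have bx: "real b * K \<le> 3 * x" using memI[OF bN] by simp
    have ga: "(g1 a)^2 \<le> K / x"
    proof -
      have "(g1 a)^2 = 1 / real a" by (rule g1_sq[OF a1])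
      also have "\<dots> \<le> K / x" using ax x a1 by (simp add: field_simps)
      finally show ?thesis .
    qed
    have bma: "(real b - real a) * K \<le> 2 * x" using ax bx by (simp add: algebra_simps)
    have cardN: "real (card N) = real b - real a + 1" unfolding Nab using ab by simp
    define B where "B r = (\<Sum>n\<in>{n\<in>N. n mod q = r}. fw (real n))" for r
    have Bab: "B r = (\<Sum>n\<in>{n\<in>{a..b}. n mod q = r}. fw (real n))" for r unfolding B_def Nab ..
    have main: "\<exists>m. real (q-1) * (\<Sum>r\<in>{1..<q}. (B r - m)^2) \<le> real (q-1) * (16 * AA^2)"
    proof (cases "real q * K \<le> x")
      case True
      have "(\<Sum>r\<in>{1..<q}. (B r - B 1)^2) \<le> (\<Sum>r\<in>{1..<q}. (2 * AA * g1 a)^2)"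
      proof (rule sum_mono)
        fix r assume "r \<in> {1..<q}"
        then show "(B r - B 1)^2 \<le> (2 * AA * g1 a)^2" unfolding Bab using a1 q1
          by (intro sq_le_of_abs Bdev) auto
      qed
      also have "\<dots> = real (q-1) * (4 * AA^2 * (g1 a)^2)" by (simp add: power_mult_distrib)
      also have "\<dots> \<le> real (q-1) * (4 * AA^2 * (K / x))"
        using ga AA0 by (intro mult_left_mono) auto
      also have "\<dots> \<le> real q * (4 * AA^2 * (K / x))" using AA0 K1 x by (intro mult_right_mono) auto
      also have "\<dots> = 4 * AA^2 * (real q * K / x)" by simp
      also have "\<dots> \<le> 4 * AA^2 * 1" using True x by (intro mult_left_mono) auto
      also have "\<dots> \<le> 16 * AA^2" by simp
      finally have "(\<Sum>r\<in>{1..<q}. (B r - B 1)^2) \<le> 16 * AA^2" .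
      then show ?thesis by (intro exI[of _ "B 1"] mult_left_mono) auto
    next
      case False
      define G where "G = AA * g1 a"
      have G0: "0 \<le> G" unfolding G_def using AA0 g1_pos by simp
      have fwG: "\<bar>fw (real n)\<bar> \<le> G" if "n \<in> N" for n
        unfolding G_def using that a1 Nab by (intro fw_abs) auto
      have cnt: "real (card {n\<in>N. n mod q = r}) \<le> 4" for r
      proof -
        have "real (card {n\<in>N. n mod q = r}) \<le> (real b - real a) / real q + 2"
          unfolding Nab using count_class[OF _ ab] q1 by simp
        moreover have "(real b - real a) / real q \<le> 2"
        proof -
          have "(real b - real a) * K \<le> 2 * (real q * K)" using bma False by simp
          then have "real b - real a \<le> 2 * real q" using K1 by simp
          then show ?thesis using q1 by (simp add: field_simps)
        qed
        ultimately show ?thesis by simp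
      qed
      have Babs: "\<bar>B r\<bar> \<le> (\<Sum>n\<in>{n\<in>N. n mod q = r}. \<bar>fw (real n)\<bar>)" for r
        unfolding B_def by (rule sum_abs)
      have Bbd: "(\<Sum>n\<in>{n\<in>N. n mod q = r}. \<bar>fw (real n)\<bar>) \<le> 4 * G" for r
      proof -
        have "(\<Sum>n\<in>{n\<in>N. n mod q = r}. \<bar>fw (real n)\<bar>) \<le> real (card {n\<in>N. n mod q = r}) * G"
          using fwG by (intro sum_bounded_above) auto
        also have "\<dots> \<le> 4 * G" using cnt G0 by (intro mult_right_mono) auto
        finally show ?thesis .
      qed
      have "(\<Sum>r\<in>{1..<q}. (B r - 0)^2) \<le> (\<Sum>r\<in>{1..<q}. 4 * G * (\<Sum>n\<in>{n\<in>N. n mod q = r}. \<bar>fw (real n)\<bar>))"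
      proof (rule sum_mono)
        fix r
        have "(B r - 0)^2 = \<bar>B r\<bar> * \<bar>B r\<bar>" by (simp add: power2_eq_square)
        also have "\<dots> \<le> (4 * G) * (\<Sum>n\<in>{n\<in>N. n mod q = r}. \<bar>fw (real n)\<bar>)"
          using Babs[of r] Bbd[of r] by (intro mult_mono) auto
        finally show "(B r - 0)^2 \<le> 4 * G * (\<Sum>n\<in>{n\<in>N. n mod q = r}. \<bar>fw (real n)\<bar>)" .
      qed
      also have "\<dots> = 4 * G * (\<Sum>r\<in>{1..<q}. \<Sum>n\<in>{n\<in>N. n mod q = r}. \<bar>fw (real n)\<bar>)"
        by (simp add: sum_distrib_left)
      also have "\<dots> \<le> 4 * G * (\<Sum>n\<in>N. \<bar>fw (real n)\<bar>)"
        using G0 by (intro mult_left_mono classes_le fN) auto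
      also have "\<dots> \<le> 4 * G * (real (card N) * G)"
        using G0 fwG by (intro mult_left_mono sum_bounded_above) auto
      also have "\<dots> = 4 * AA^2 * ((g1 a)^2 * real (card N))" unfolding G_def by (simp add: power2_eq_square)
      also have "\<dots> \<le> 4 * AA^2 * ((K / x) * (2 * x / K + 1))"
      proof (intro mult_left_mono mult_mono)
        show "real (card N) \<le> 2 * x / K + 1" unfolding cardN using bma K1 by (simp add: field_simps)
      qed (use ga K1 x in auto)
      also have "\<dots> = 4 * AA^2 * (2 + K / x)" using K1 x by (simp add: field_simps)
      also have "\<dots> \<le> 4 * AA^2 * 4"
      proof -
        have "K / x \<le> 2" using cz x unfolding K_def by (simp add: field_simps)
        then show ?thesis using AA0 by (intro mult_left_mono) auto
      qed
      finally have "(\<Sum>r\<in>{1..<q}. (B r - 0)^2) \<le> 16 * AA^2" by simp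
      then show ?thesis by (intro exI[of _ 0] mult_left_mono) auto
    qed
    then obtain m where m: "real (q-1) * (\<Sum>r\<in>{1..<q}. (B r - m)^2) \<le> real (q-1) * (16 * AA^2)" by blast
    have "(\<Sum>chi\<in>S. (cmod (\<Sum>n\<in>N. chi n * complex_of_real (fw (real n))))^2)
        \<le> real (q-1) * (\<Sum>r\<in>{1..<q}. (B r - m)^2)"
      unfolding B_def by (rule char_mean[OF q fS S fN])
    then show ?thesis using m unfolding N_def by simp
  qed
qed

lemma mu_abs: "\<bar>moebius_mu c\<bar> \<le> 1"
  unfolding moebius_mu_def by (auto simp: power_abs)

lemma weight_le: assumes "dirichlet_char q chi" "prime q"
  shows "cmod (of_int (moebius_mu c) * chi c ^ 6) \<le> 1"
proof -
  have "cmod (of_int (moebius_mu c) * chi c ^ 6) = \<bar>real_of_int (moebius_mu c)\<bar> * cmod (chi c) ^ 6"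
    by (simp add: norm_mult norm_power)
  also have "\<dots> \<le> 1 * 1"
    using mu_abs[of c] dc_norm_le[OF assms, of c]
    by (intro mult_mono power_le_one) (auto simp: of_int_abs[symmetric] simp del: of_int_abs)
  finally show ?thesis by simp
qed

lemma cs_sq: fixes A :: "'a set" and f :: "'a \<Rightarrow> real"
  shows "(\<Sum>i\<in>A. f i)^2 \<le> real (card A) * (\<Sum>i\<in>A. (f i)^2)"
  using Cauchy_Schwarz_ineq_sum[of "\<lambda>i. 1" f A] by simp

lemma cmod_sum_sq: fixes A :: "nat set" and w T :: "nat \<Rightarrow> complex"
  assumes "\<And>i. i \<in> A \<Longrightarrow> cmod (w i) \<le> 1"
  shows "(cmod (\<Sum>i\<in>A. w i * T i))^2 \<le> real (card A) * (\<Sum>i\<in>A. (cmod (T i))^2)"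
proof -
  have "cmod (\<Sum>i\<in>A. w i * T i) \<le> (\<Sum>i\<in>A. cmod (w i * T i))" by (rule norm_sum)
  also have "\<dots> \<le> (\<Sum>i\<in>A. cmod (T i))"
  proof (rule sum_mono)
    fix i assume "i \<in> A"
    then have "cmod (w i) * cmod (T i) \<le> 1 * cmod (T i)" using assms by (intro mult_right_mono) auto
    then show "cmod (w i * T i) \<le> cmod (T i)" by (simp add: norm_mult)
  qed
  finally have "(cmod (\<Sum>i\<in>A. w i * T i))^2 \<le> (\<Sum>i\<in>A. cmod (T i))^2"
    by (intro power_mono) auto
  also have "\<dots> \<le> real (card A) * (\<Sum>i\<in>A. (cmod (T i))^2)" by (rule cs_sq)
  finally show ?thesis .
qed

lemma card_Cs: fixes z :: real assumes "0 < z"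
  shows "real (card {c::nat. 1 \<le> c \<and> real (c^6) \<le> z}) ^ 2 \<le> z powr (1/3)"
proof -
  define w where "w = z powr (1/6)"
  have w0: "0 \<le> w" unfolding w_def by simp
  have w6: "w ^ 6 = z" unfolding w_def using assms
    by (simp add: powr_realpow[symmetric] powr_powr)
  have w2: "w ^ 2 = z powr (1/3)" unfolding w_def using assms
    by (simp add: powr_realpow[symmetric] powr_powr)
  have sub: "{c::nat. 1 \<le> c \<and> real (c^6) \<le> z} \<subseteq> {1..nat \<lfloor>w\<rfloor>}"
  proof
    fix c :: nat assume "c \<in> {c. 1 \<le> c \<and> real (c^6) \<le> z}"
    then have c: "1 \<le> c" "real c ^ 6 \<le> z" by auto
    have "real c \<le> w"
    proof (rule ccontr)
      assume "\<not> real c \<le> w"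
      then have "w ^ 6 < real c ^ 6" using w0 by (intro power_strict_mono) auto
      then show False using c w6 by simp
    qed
    then show "c \<in> {1..nat \<lfloor>w\<rfloor>}" using c by (simp add: le_nat_floor)
  qed
  have "card {c::nat. 1 \<le> c \<and> real (c^6) \<le> z} \<le> nat \<lfloor>w\<rfloor>"
    using card_mono[OF _ sub] by simp
  then have "real (card {c::nat. 1 \<le> c \<and> real (c^6) \<le> z}) \<le> w" using w0
  proof -
    assume h: "card {c::nat. 1 \<le> c \<and> real (c^6) \<le> z} \<le> nat \<lfloor>w\<rfloor>"
    have "real (nat \<lfloor>w\<rfloor>) = real_of_int \<lfloor>w\<rfloor>" using w0 by simp
    also have "\<dots> \<le> w" by simp
    finally show ?thesis using h by (meson of_nat_le_iff order_trans)
  qed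
  then have "real (card {c::nat. 1 \<le> c \<and> real (c^6) \<le> z}) ^ 2 \<le> w ^ 2" by (intro power_mono) auto
  then show ?thesis using w2 by simp
qed

lemma main_bound:
  fixes x z :: real and q :: nat and I :: "real set"
  assumes x: "x \<ge> 2" and q: "prime q" and z: "0 < z" "z \<le> 2 * x"
    and I: "is_interval I" "I \<subseteq> {x..3 * x}"
  shows "(1 / real (totient q)) *
       (\<Sum>chi \<in> {chi. dirichlet_char q chi \<and> chi \<noteq> principal_char q}.
          (cmod (\<Sum>(n, c) \<in> {(n, c). n \<ge> 1 \<and> c \<ge> 1 \<and> real (c ^ 6) \<le> z \<and>
                                        real (n * c ^ 6) \<in> I}.
                   of_int (moebius_mu c) * chi n * chi c ^ 6 * complex_of_real (fw (real n))))\<^sup>2)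
     \<le> 16 * AA^2 * z powr (1/3)"
proof -
  define SS where "SS = {chi. dirichlet_char q chi \<and> chi \<noteq> principal_char q}"
  define P where "P = {(n, c). n \<ge> 1 \<and> c \<ge> 1 \<and> real (c ^ 6) \<le> z \<and> real (n * c ^ 6) \<in> I}"
  define Cs where "Cs = {c::nat. 1 \<le> c \<and> real (c^6) \<le> z}"
  define Nc where "Nc c = {n::nat. 1 \<le> n \<and> real (n * c^6) \<in> I}" for c
  define T where "T chi c = (\<Sum>n\<in>Nc c. chi n * complex_of_real (fw (real n)))" for chi :: "nat \<Rightarrow> complex" and c
  define F where "F chi = (\<Sum>(n, c)\<in>P. of_int (moebius_mu c) * chi n * chi c ^ 6 * complex_of_real (fw (real n)))" for chi :: "nat \<Rightarrow> complex"
  have q1: "q > 1" using prime_gt_1_nat[OF q] .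
  have AA0: "0 \<le> AA" by (rule AA_nonneg)
  have tot: "real (totient q) = real (q - 1)" using totient_prime[OF q] by simp
  have x0: "x > 0" using x by simp
  have fCs: "finite Cs"
  proof (rule finite_subset)
    show "Cs \<subseteq> {..nat \<lceil>z\<rceil>}"
    proof
      fix c assume "c \<in> Cs"
      then have c: "1 \<le> c" "real (c^6) \<le> z" unfolding Cs_def by auto
      have "c \<le> c^6" using c(1) by (simp add: self_le_power)
      then have "real c \<le> z" using c(2) by (meson of_nat_le_iff order_trans)
      then show "c \<in> {..nat \<lceil>z\<rceil>}" by (simp add: le_nat_iff) linarith
    qed
  qed simp
  have fNc: "finite (Nc c)" if "1 \<le> c" for c
  proof (rule finite_subset)
    show "Nc c \<subseteq> {..nat \<lceil>3*x\<rceil>}"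
    proof
      fix n assume "n \<in> Nc c"
      then have n: "real (n * c^6) \<le> 3 * x" using I(2) unfolding Nc_def by auto
      have "n \<le> n * c^6" using that by simp
      then have "real n \<le> 3 * x" using n by (meson of_nat_le_iff order_trans)
      then show "n \<in> {..nat \<lceil>3*x\<rceil>}" by (simp add: le_nat_iff) linarith
    qed
  qed simp
  have Peq: "P = (\<lambda>(c, n). (n, c)) ` (SIGMA c:Cs. Nc c)"
    unfolding P_def Cs_def Nc_def by (auto simp: image_iff)
  have inj: "inj_on (\<lambda>(c, n). (n, c)) (SIGMA c:Cs. Nc c)" by (auto simp: inj_on_def)
  have Feq: "F chi = (\<Sum>c\<in>Cs. (of_int (moebius_mu c) * chi c ^ 6) * T chi c)" for chi
  proof -
    have "F chi = (\<Sum>(c, n)\<in>(SIGMA c:Cs. Nc c). of_int (moebius_mu c) * chi n * chi c ^ 6 * complex_of_real (fw (real n)))"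
      unfolding F_def Peq by (subst sum.reindex[OF inj]) (simp add: case_prod_beta comp_def)
    also have "\<dots> = (\<Sum>c\<in>Cs. \<Sum>n\<in>Nc c. of_int (moebius_mu c) * chi n * chi c ^ 6 * complex_of_real (fw (real n)))"
      by (rule sum.Sigma[symmetric]) (use fCs fNc Cs_def in auto)
    also have "\<dots> = (\<Sum>c\<in>Cs. (of_int (moebius_mu c) * chi c ^ 6) * T chi c)"
      unfolding T_def by (simp add: sum_distrib_left algebra_simps)
    finally show ?thesis .
  qed
  have goal: "(1 / real (totient q)) * (\<Sum>chi\<in>SS. (cmod (F chi))^2) \<le> 16 * AA^2 * z powr (1/3)"
  proof (cases "finite SS")
    case False
    then show ?thesis using AA0 by simp
  next
    case True
    have "(\<Sum>chi\<in>SS. (cmod (F chi))^2) \<le> (\<Sum>chi\<in>SS. real (card Cs) * (\<Sum>c\<in>Cs. (cmod (T chi c))^2))"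
    proof (rule sum_mono)
      fix chi assume "chi \<in> SS"
      then have dc: "dirichlet_char q chi" unfolding SS_def by simp
      show "(cmod (F chi))^2 \<le> real (card Cs) * (\<Sum>c\<in>Cs. (cmod (T chi c))^2)"
        unfolding Feq by (rule cmod_sum_sq) (rule weight_le[OF dc q])
    qed
    also have "\<dots> = real (card Cs) * (\<Sum>c\<in>Cs. \<Sum>chi\<in>SS. (cmod (T chi c))^2)"
      by (simp add: sum_distrib_left sum.swap[of _ SS])
    also have "\<dots> \<le> real (card Cs) * (\<Sum>c\<in>Cs. real (q-1) * (16 * AA^2))"
    proof (intro mult_left_mono sum_mono)
      fix c assume "c \<in> Cs"
      then have c: "1 \<le> c" "real (c^6) \<le> 2 * x" using z unfolding Cs_def by auto
      show "(\<Sum>chi\<in>SS. (cmod (T chi c))^2) \<le> real (q-1) * (16 * AA^2)"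
        unfolding T_def Nc_def by (rule per_c[OF q True _ x0 c I]) (simp add: SS_def)
    qed simp
    also have "\<dots> = real (q-1) * (16 * AA^2) * real (card Cs) ^ 2" by (simp add: power2_eq_square)
    finally have s: "(\<Sum>chi\<in>SS. (cmod (F chi))^2) \<le> real (q-1) * (16 * AA^2) * real (card Cs) ^ 2" .
    have "(1 / real (totient q)) * (\<Sum>chi\<in>SS. (cmod (F chi))^2)
        \<le> (1 / real (q-1)) * (real (q-1) * (16 * AA^2) * real (card Cs) ^ 2)"
      unfolding tot using s by (intro mult_left_mono) auto
    also have "\<dots> = 16 * AA^2 * real (card Cs) ^ 2" using q1 by simp
    also have "\<dots> \<le> 16 * AA^2 * z powr (1/3)"
      unfolding Cs_def using card_Cs[OF z(1)] AA0 by (intro mult_left_mono) auto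
    finally show ?thesis .
  qed
  then show ?thesis unfolding SS_def F_def P_def .
qed

theorem mainTheorem9:
  fixes eps :: real
  assumes "eps > 0"
  shows "\<exists>C > 0. \<forall>(x::real) (q::nat) (z::real) (I::real set).
     x \<ge> 2 \<longrightarrow> prime q \<longrightarrow> real q \<le> x powr (1 - eps) \<longrightarrow>
     0 < z \<longrightarrow> z \<le> 2 * x \<longrightarrow>
     is_interval I \<longrightarrow> I \<subseteq> {x..3 * x} \<longrightarrow>
     (1 / real (totient q)) *
       (\<Sum>chi \<in> {chi. dirichlet_char q chi \<and> chi \<noteq> principal_char q}.
          (cmod (\<Sum>(n, c) \<in> {(n, c). n \<ge> 1 \<and> c \<ge> 1 \<and> real (c ^ 6) \<le> z \<and>
                                        real (n * c ^ 6) \<in> I}.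
                   of_int (moebius_mu c) * chi n * chi c ^ 6 * complex_of_real (fw (real n))))\<^sup>2)
     \<le> C * (z powr (1/3) + measure lborel I powr (1/6) * real q powr (5/6)) * ln x ^ 6"
proof -
  define C where "C = 16 * AA^2 / (ln 2)^6 + 1"
  have l2: "0 < ln (2::real)" by simp
  have C0: "C > 0" unfolding C_def using l2 by (simp add: add_nonneg_pos)
  show ?thesis
  proof (intro exI[of _ C] conjI allI impI C0)
    fix x z :: real and q :: nat and I :: "real set"
    assume x: "x \<ge> 2" and q: "prime q" and "real q \<le> x powr (1 - eps)" and z: "0 < z" "z \<le> 2 * x"
      and I: "is_interval I" "I \<subseteq> {x..3 * x}"
    have lx: "ln 2 \<le> ln x" using x by simp
    have lx6: "(ln 2)^6 \<le> (ln x)^6" using lx l2 by (intro power_mono) auto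
    have "16 * AA^2 = (16 * AA^2 / (ln 2)^6) * (ln 2)^6" using l2 by simp
    also have "\<dots> \<le> C * (ln 2)^6" unfolding C_def using l2 by (intro mult_right_mono) auto
    also have "\<dots> \<le> C * (ln x)^6" using lx6 C0 by (intro mult_left_mono) auto
    finally have k: "16 * AA^2 \<le> C * (ln x)^6" .
    have t0: "0 \<le> measure lborel I powr (1/6) * real q powr (5/6)" by simp
    have "16 * AA^2 * z powr (1/3) \<le> C * (ln x)^6 * z powr (1/3)"
      using k by (intro mult_right_mono) auto
    also have "\<dots> \<le> C * (ln x)^6 * (z powr (1/3) + measure lborel I powr (1/6) * real q powr (5/6))"
      using t0 C0 by (intro mult_left_mono) auto
    also have "\<dots> = C * (z powr (1/3) + measure lborel I powr (1/6) * real q powr (5/6)) * ln x ^ 6"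
      by (simp add: algebra_simps)
    finally have r: "16 * AA^2 * z powr (1/3) \<le> C * (z powr (1/3) + measure lborel I powr (1/6) * real q powr (5/6)) * ln x ^ 6" .
    show "(1 / real (totient q)) *
       (\<Sum>chi \<in> {chi. dirichlet_char q chi \<and> chi \<noteq> principal_char q}.
          (cmod (\<Sum>(n, c) \<in> {(n, c). n \<ge> 1 \<and> c \<ge> 1 \<and> real (c ^ 6) \<le> z \<and>
                                        real (n * c ^ 6) \<in> I}.
                   of_int (moebius_mu c) * chi n * chi c ^ 6 * complex_of_real (fw (real n))))\<^sup>2)
     \<le> C * (z powr (1/3) + measure lborel I powr (1/6) * real q powr (5/6)) * ln x ^ 6"
      using main_bound[OF x q z I] r by linarith
  qed
qed

end
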